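(* With $U_0,\Omega'_0,U'_0,y,\Upsilon_y,Z_y,S_2$ as in the context, let $Z'_y$ be the unique function on $\mathbb{K}^E$ with $dZ'_y=\cos\Upsilon_y\,dU'_0+\sin\Upsilon_y\star dU'_0$ and $Z'_y\to0$ at infinity. Then the one-form $$\mathbf{T}_2=-\frac{4}{\rho}S_2\star d(Z'_y+U'_0)$$ satisfies on $\mathbb{K}^E$ $$d(\rho\star\mathbf{T}_2)=8\sin\Upsilon_y\,e^{-2U_0-2Z_y}\,d\Omega'_0\wedge\star dU'_0,$$ equivalently $\nabla_aT_2^a=\frac{8}{\sqrt{\rho^2+(z-y)^2}}e^{-2U_0-2Z_y}(d\Omega'_0,dU'_0)_\gamma$ off the axis.
   Context: Let $\mathbb{E}^3$ have cylindrical coordinates $(\rho,z,\phi)$ and flat metric $\gamma=d\rho^2+dz^2+\rho^2d\phi^2$, with covariant derivative $\nabla$. Let $\Sigma_0$ be a $C^1$ axially symmetric surface diffeomorphic to a 2-sphere, given by $\{\rho=\rho_0(\mu),z=z_0(\mu),\phi=\varphi\}$, $\mu\in[\mu_S,\mu_N]$, with $\mu_S<\mu_N$ the only zeros of $\rho_0$ and $z_S:=z_0(\mu_S)<z_N:=z_0(\mu_N)$; $D_0$ is its unbounded exterior region. A function $f$ on $D_0$ is regular if it is $C^2$ on $D_0$, has a $C^1$ extension to $D_0\cup\Sigma_0$, and $rf$ is bounded ($r=\sqrt{\rho^2+z^2}$). $\mathbb{K}=\{(\rho,z):\rho\ge0\}$ carries the metric $d\rho^2+dz^2$ and Hodge star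 with $\star d\rho=-dz$, $\star dz=d\rho$; axially symmetric functions and one-forms $T^\rho d\rho+T^zdz$ are identified with objects on $\mathbb{K}$; $\mathbb{K}^E$ is the projection of $D_0$. $U_0$ and $U'_0$ are axially symmetric regular flat-harmonic functions on $D_0$, and $\Omega'_0$ an axially symmetric regular solution of $\triangle_\gamma\Omega'_0-4(d\Omega'_0,dU_0)_\gamma=0$. For $y\in(z_S,z_N)$: $\cos\Upsilon_y=(z-y)/\sqrt{\rho^2+(z-y)^2}$, $\sin\Upsilon_y=\rho/\sqrt{\rho^2+(z-y)^2}$; $Z_y$ is the solution of $dZ_y=\cos\Upsilon_y\,dU_0+\sin\Upsilon_y\star dU_0$ vanishing at infinity; $S_2$ is the solution vanishing at infinity of $dS_2=e^{-2U_0-2Z_y}[(1-\cos\Upsilon_y)d\Omega'_0-\sin\Upsilon_y\star d\Omega'_0]$. *)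

theory Defs
  imports "HOL-Analysis.Analysis"
begin

definition cyl_pt :: "real \<Rightarrow> real \<Rightarrow> real \<Rightarrow> real^3" where
  "cyl_pt r z phi = vector [r * cos phi, r * sin phi, z]"

definition rev_surface :: "(real \<Rightarrow> real) \<Rightarrow> (real \<Rightarrow> real) \<Rightarrow> real \<Rightarrow> real \<Rightarrow> (real^3) set" where
  "rev_surface rho0 z0 muS muN =
     {x. \<exists>mu \<in> {muS..muN}. \<exists>phi. x = cyl_pt (rho0 mu) (z0 mu) phi}"

definition C1_interval :: "(real \<Rightarrow> real) \<Rightarrow> real set \<Rightarrow> bool" where
  "C1_interval f I \<longleftrightarrow> (\<exists>f'. continuous_on I f' \<and>
      (\<forall>t\<in>I. (f has_real_derivative f' t) (at t within I)))"

text \<open>A set is a C^1 embedded surface diffeomorphic to the 2-sphere: the image of the unit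
  sphere under an injective C^1 map whose differential is injective on tangent planes.\<close>
definition C1_sphere_surface :: "(real^3) set \<Rightarrow> bool" where
  "C1_sphere_surface S \<longleftrightarrow>
     (\<exists>h :: real^3 \<Rightarrow> real^3. \<exists>V. \<exists>D. open V \<and> sphere 0 1 \<subseteq> V \<and>
        (\<forall>x\<in>V. (h has_derivative D x) (at x)) \<and>
        (\<forall>v. continuous_on V (\<lambda>x. D x v)) \<and>
        inj_on h (sphere 0 1) \<and> h ` sphere 0 1 = S \<and>
        (\<forall>x\<in>sphere 0 1. \<forall>v. v \<bullet> x = 0 \<and> v \<noteq> 0 \<longrightarrow> D x v \<noteq> 0))"

definition grad3 :: "(real^3 \<Rightarrow> real) \<Rightarrow> real^3 \<Rightarrow> real^3" where
  "grad3 f x = (\<Sum>i\<in>Basis. deriv (\<lambda>t. f (x + t *\<^sub>R i)) 0 *\<^sub>R i)"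

definition lap3 :: "(real^3 \<Rightarrow> real) \<Rightarrow> real^3 \<Rightarrow> real" where
  "lap3 f x = (\<Sum>i\<in>Basis. deriv (deriv (\<lambda>t. f (x + t *\<^sub>R i))) 0)"

definition C1_on :: "(real^3) set \<Rightarrow> (real^3 \<Rightarrow> real) \<Rightarrow> bool" where
  "C1_on S f \<longleftrightarrow> (\<exists>g. continuous_on S g \<and>
      (\<forall>x\<in>S. (f has_derivative (\<lambda>h. g x \<bullet> h)) (at x)))"

definition C2_on :: "(real^3) set \<Rightarrow> (real^3 \<Rightarrow> real) \<Rightarrow> bool" where
  "C2_on S f \<longleftrightarrow> (\<exists>g. (\<forall>x\<in>S. (f has_derivative (\<lambda>h. g x \<bullet> h)) (at x)) \<and>
      (\<forall>i\<in>Basis. C1_on S (\<lambda>x. g x \<bullet> i)))"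

text \<open>Regular function on the exterior region D (with boundary surface S): C^2 on D,
  C^1 extension to D \<union> S (function and gradient extend continuously), and r f bounded.\<close>
definition regular :: "(real^3) set \<Rightarrow> (real^3) set \<Rightarrow> (real^3 \<Rightarrow> real) \<Rightarrow> bool" where
  "regular D S f \<longleftrightarrow> C2_on D f \<and>
     (\<exists>F g. (\<forall>x\<in>D. F x = f x) \<and> continuous_on (D \<union> S) F \<and> continuous_on (D \<union> S) g \<and>
        (\<forall>x\<in>D. (F has_derivative (\<lambda>h. g x \<bullet> h)) (at x))) \<and>
     bounded ((\<lambda>x. norm x * f x) ` D)"

definition lift :: "(real \<times> real \<Rightarrow> real) \<Rightarrow> real^3 \<Rightarrow> real" where
  "lift U x = U (sqrt ((x$1)\<^sup>2 + (x$2)\<^sup>2), x$3)"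

definition proj_K :: "(real^3) set \<Rightarrow> (real \<times> real) set" where
  "proj_K D = {p. fst p \<ge> 0 \<and> cyl_pt (fst p) (snd p) 0 \<in> D}"

definition pd_rho :: "(real \<times> real \<Rightarrow> real) \<Rightarrow> real \<times> real \<Rightarrow> real" where
  "pd_rho f p = deriv (\<lambda>r. f (r, snd p)) (fst p)"

definition pd_z :: "(real \<times> real \<Rightarrow> real) \<Rightarrow> real \<times> real \<Rightarrow> real" where
  "pd_z f p = deriv (\<lambda>s. f (fst p, s)) (snd p)"

text \<open>One-forms T^rho d rho + T^z dz are represented by their component pairs (T^rho, T^z);
  two-forms by their coefficient of d rho \<and> dz.\<close>
definition d0 :: "(real \<times> real \<Rightarrow> real) \<Rightarrow> real \<times> real \<Rightarrow> real \<times> real" where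
  "d0 f p = (pd_rho f p, pd_z f p)"

text \<open>Hodge star: star d rho = - dz, star dz = d rho.\<close>
definition hodge :: "real \<times> real \<Rightarrow> real \<times> real" where
  "hodge w = (snd w, - fst w)"

definition wedge :: "real \<times> real \<Rightarrow> real \<times> real \<Rightarrow> real" where
  "wedge v w = fst v * snd w - snd v * fst w"

definition d1 :: "(real \<times> real \<Rightarrow> real \<times> real) \<Rightarrow> real \<times> real \<Rightarrow> real" where
  "d1 w p = pd_rho (\<lambda>q. snd (w q)) p - pd_z (\<lambda>q. fst (w q)) p"

text \<open>Flat divergence of the axially symmetric vector field T^rho d_rho + T^z d_z on E^3,
  expressed in cylindrical coordinates (valid off the axis).\<close>
definition cyl_div :: "(real \<times> real \<Rightarrow> real \<times> real) \<Rightarrow> real \<times> real \<Rightarrow> real" where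
  "cyl_div T p = pd_rho (\<lambda>q. fst q * fst (T q)) p / fst p + pd_z (\<lambda>q. snd (T q)) p"

definition cosU :: "real \<Rightarrow> real \<times> real \<Rightarrow> real" where
  "cosU y p = (snd p - y) / sqrt ((fst p)\<^sup>2 + (snd p - y)\<^sup>2)"

definition sinU :: "real \<Rightarrow> real \<times> real \<Rightarrow> real" where
  "sinU y p = fst p / sqrt ((fst p)\<^sup>2 + (snd p - y)\<^sup>2)"

definition has_diff_on :: "(real \<times> real \<Rightarrow> real) \<Rightarrow> (real \<times> real \<Rightarrow> real \<times> real) \<Rightarrow> (real \<times> real) set \<Rightarrow> bool" where
  "has_diff_on g w S \<longleftrightarrow>
     (\<forall>p\<in>S. (g has_derivative (\<lambda>h. fst (w p) * fst h + snd (w p) * snd h)) (at p))"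

definition vanishes_at_infinity :: "(real \<times> real \<Rightarrow> real) \<Rightarrow> (real \<times> real) set \<Rightarrow> bool" where
  "vanishes_at_infinity g S \<longleftrightarrow>
     (\<forall>e>0. \<exists>R. \<forall>p\<in>S. norm p \<ge> R \<longrightarrow> \<bar>g p\<bar> < e)"

end

theory Submission
  imports Defs
begin



lemma line_deriv1:
  fixes f :: "real \<times> real \<Rightarrow> real"
  assumes "(f has_derivative F') (at (t, s))" "bounded_linear F'"
  shows "((\<lambda>r. f (r, s)) has_real_derivative F' (1,0)) (at t)"
proof -
  have "((\<lambda>r. (r, s)) has_derivative (\<lambda>u. (u, 0))) (at t)"
    by (auto intro!: derivative_eq_intros)
  from has_derivative_compose[OF this assms(1)]
  have "((\<lambda>r. f (r, s)) has_derivative (\<lambda>u. F' (u, 0))) (at t)" by simp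
  moreover have "(\<lambda>u. F' (u, 0)) = (\<lambda>u. F' (1,0) * u)"
  proof
    fix u :: real
    have "F' (u *\<^sub>R (1,0)) = u *\<^sub>R F' (1,0)"
      using linear_scale[OF bounded_linear.linear[OF assms(2)]] by blast
    then show "F' (u, 0) = F' (1,0) * u" by simp
  qed
  ultimately show ?thesis by (simp add: has_field_derivative_def)
qed

lemma line_deriv2:
  fixes f :: "real \<times> real \<Rightarrow> real"
  assumes "(f has_derivative F') (at (t, s))" "bounded_linear F'"
  shows "((\<lambda>r. f (t, r)) has_real_derivative F' (0,1)) (at s)"
proof -
  have "((\<lambda>r. (t, r)) has_derivative (\<lambda>u. (0, u))) (at s)"
    by (auto intro!: derivative_eq_intros)
  from has_derivative_compose[OF this assms(1)]
  have "((\<lambda>r. f (t, r)) has_derivative (\<lambda>u. F' (0, u))) (at s)" by simp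
  moreover have "(\<lambda>u. F' (0, u)) = (\<lambda>u. F' (0,1) * u)"
  proof
    fix u :: real
    have "F' (u *\<^sub>R (0,1)) = u *\<^sub>R F' (0,1)"
      using linear_scale[OF bounded_linear.linear[OF assms(2)]] by blast
    then show "F' (0, u) = F' (0,1) * u" by simp
  qed
  ultimately show ?thesis by (simp add: has_field_derivative_def)
qed

lemma pd_from_der:
  fixes F :: "real \<times> real \<Rightarrow> real"
  assumes "(F has_derivative F') (at p)"
  shows "pd_rho F p = F' (1,0)" "pd_z F p = F' (0,1)"
proof -
  have bl: "bounded_linear F'" using assms has_derivative_bounded_linear by blast
  obtain a b where p: "p = (a,b)" by (cases p)
  show "pd_rho F p = F' (1,0)"
    using line_deriv1[OF assms[unfolded p] bl] unfolding pd_rho_def p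
    by (simp add: DERIV_imp_deriv)
  show "pd_z F p = F' (0,1)"
    using line_deriv2[OF assms[unfolded p] bl] unfolding pd_z_def p
    by (simp add: DERIV_imp_deriv)
qed

lemma grad_line1:
  fixes f :: "real \<times> real \<Rightarrow> real"
  assumes "(f has_derivative (\<lambda>k. fst c * fst k + snd c * snd k)) (at (p + (t, s)))"
  shows "((\<lambda>r. f (p + (r, s))) has_real_derivative fst c) (at t)"
proof -
  have "((\<lambda>r. p + (r, s)) has_derivative (\<lambda>u. (u, 0))) (at t)"
    by (auto intro!: derivative_eq_intros)
  from has_derivative_compose[OF this assms(1)]
  have "((\<lambda>r. f (p + (r, s))) has_derivative (\<lambda>u. fst c * u)) (at t)" by simp
  then show ?thesis by (simp add: has_field_derivative_def)
qed

lemma grad_line2: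
  fixes f :: "real \<times> real \<Rightarrow> real"
  assumes "(f has_derivative (\<lambda>k. fst c * fst k + snd c * snd k)) (at (p + (t, s)))"
  shows "((\<lambda>r. f (p + (t, r))) has_real_derivative snd c) (at s)"
proof -
  have "((\<lambda>r. p + (t, r)) has_derivative (\<lambda>u. (0, u))) (at s)"
    by (auto intro!: derivative_eq_intros)
  from has_derivative_compose[OF this assms(1)]
  have "((\<lambda>r. f (p + (t, r))) has_derivative (\<lambda>u. snd c * u)) (at s)" by simp
  then show ?thesis by (simp add: has_field_derivative_def)
qed

lemma clairaut:
  fixes f :: "real \<times> real \<Rightarrow> real" and B L :: "real \<times> real \<Rightarrow> real \<times> real"
  assumes N: "open N" "p \<in> N"
    and fd: "\<And>q. q \<in> N \<Longrightarrow> (f has_derivative (\<lambda>k. fst (B q) * fst k + snd (B q) * snd k)) (at q)"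
    and Bd: "(B has_derivative L) (at p)"
  shows "fst (L (0,1)) = snd (L (1,0))"
proof -
  define a where "a = fst (L (0,1))"
  define b where "b = snd (L (1,0))"
  have bl: "bounded_linear L" using Bd has_derivative_bounded_linear by blast
  have lin: "linear L" using bl bounded_linear.linear by blast
  have key: "\<bar>a - b\<bar> \<le> 8 * e" if e: "e > 0" for e
  proof -
    obtain d1 where d1: "d1 > 0" "ball p d1 \<subseteq> N" using N openE by blast
    obtain d2 where d2: "d2 > 0" "\<forall>y. norm (y - p) < d2 \<longrightarrow> norm (B y - B p - L (y - p)) \<le> e * norm (y - p)"
      using Bd e unfolding has_derivative_at_alt by blast
    define h where "h = min d1 d2 / 4"
    have h: "h > 0" using d1 d2 by (simp add: h_def)
    have nrm: "norm ((t, s)::real\<times>real) \<le> 2 * h" if "\<bar>t\<bar> \<le> h" "\<bar>s\<bar> \<le> h" for t s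
      using norm_Pair_le[of t s] that by simp
    have inN: "p + (t, s) \<in> N" if "\<bar>t\<bar> \<le> h" "\<bar>s\<bar> \<le> h" for t s
    proof -
      have "norm ((t, s)::real\<times>real) < d1" using nrm[OF that] h d1 by (simp add: h_def)
      then have "p + (t, s) \<in> ball p d1" using norm_minus_cancel[of "(t,s)"] by (simp add: dist_norm)
      then show ?thesis using d1(2) by blast
    qed
    have est: "norm (B (p + (t,s)) - B p - L (t,s)) \<le> 2 * e * h" if "\<bar>t\<bar> \<le> h" "\<bar>s\<bar> \<le> h" for t s
    proof -
      have n2: "norm ((t, s)::real\<times>real) < d2" using nrm[OF that] h d2 by (simp add: h_def)
      have "norm (B (p + (t,s)) - B p - L (t,s)) \<le> e * norm ((t, s)::real\<times>real)"
        using d2(2)[rule_format, of "p + (t,s)"] n2 by simp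
      also have "\<dots> \<le> e * (2 * h)" using nrm[OF that] e by (intro mult_left_mono) auto
      finally show ?thesis by simp
    qed
    have est1: "\<bar>fst (B (p + (t,s))) - fst (B p) - fst (L (t,s))\<bar> \<le> 2 * e * h"
      and est2: "\<bar>snd (B (p + (t,s))) - snd (B p) - snd (L (t,s))\<bar> \<le> 2 * e * h"
      if "\<bar>t\<bar> \<le> h" "\<bar>s\<bar> \<le> h" for t s
    proof -
      let ?v = "B (p + (t,s)) - B p - L (t,s)"
      have "\<bar>fst ?v\<bar> \<le> norm ?v" "\<bar>snd ?v\<bar> \<le> norm ?v"
        using norm_fst_le[of "fst ?v" "snd ?v"] norm_snd_le[of "snd ?v" "fst ?v"] by (simp_all only: prod.collapse real_norm_def)
      then show "\<bar>fst (B (p + (t,s))) - fst (B p) - fst (L (t,s))\<bar> \<le> 2 * e * h"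
        "\<bar>snd (B (p + (t,s))) - snd (B p) - snd (L (t,s))\<bar> \<le> 2 * e * h"
        using est[OF that] by auto
    qed
    define \<Delta> where "\<Delta> = f (p + (h,h)) - f (p + (h,0)) - f (p + (0,h)) + f (p + (0,0))"
    have Lsplit: "L (t, s) = L (t, 0) + L (0, s)" for t s
      using linear_add[OF lin, of "(t,0)" "(0,s)"] by simp
    have Ls1: "L (0, s) = s *\<^sub>R L (0,1)" for s
      using linear_scale[OF lin, of s "(0,1)"] by simp
    have Ls2: "L (t, 0) = t *\<^sub>R L (1,0)" for t
      using linear_scale[OF lin, of t "(1,0)"] by simp
    have A1: "\<bar>\<Delta> - h * h * a\<bar> \<le> 4 * e * h * h"
    proof -
      define \<phi> where "\<phi> t = f (p + (t, h)) - f (p + (t, 0))" for t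
      have "(\<phi> has_real_derivative (fst (B (p + (t,h))) - fst (B (p + (t,0))))) (at t)"
        if "0 \<le> t" "t \<le> h" for t
        unfolding \<phi>_def
        using that h
        by (intro DERIV_diff grad_line1 fd inN) auto
      from MVT2[OF h this] obtain z where z: "0 < z" "z < h"
        "\<phi> h - \<phi> 0 = (h - 0) * (fst (B (p + (z,h))) - fst (B (p + (z,0))))" by blast
      have "\<Delta> = \<phi> h - \<phi> 0" unfolding \<Delta>_def \<phi>_def by simp
      have dd: "fst (B (p + (z,h))) - fst (B (p + (z,0))) - h * a
          = (fst (B (p + (z,h))) - fst (B p) - fst (L (z,h))) - (fst (B (p + (z,0))) - fst (B p) - fst (L (z,0)))"
        using Lsplit[of z h] Ls1[of h] by (simp add: a_def)
      have "\<bar>fst (B (p + (z,h))) - fst (B (p + (z,0))) - h * a\<bar> \<le> 4 * e * h"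
        unfolding dd using est1[of z h] est1[of z 0] z h by auto
      then have "\<bar>h * (fst (B (p + (z,h))) - fst (B (p + (z,0))) - h * a)\<bar> \<le> h * (4 * e * h)"
        using h by (simp add: abs_mult mult_left_mono)
      moreover have "\<Delta> - h * h * a = h * (fst (B (p + (z,h))) - fst (B (p + (z,0))) - h * a)"
        using \<open>\<Delta> = \<phi> h - \<phi> 0\<close> z(3) by (simp add: algebra_simps)
      ultimately show ?thesis by (simp add: algebra_simps)
    qed
    have A2: "\<bar>\<Delta> - h * h * b\<bar> \<le> 4 * e * h * h"
    proof -
      define \<phi> where "\<phi> t = f (p + (h, t)) - f (p + (0, t))" for t
      have "(\<phi> has_real_derivative (snd (B (p + (h,t))) - snd (B (p + (0,t))))) (at t)"
        if "0 \<le> t" "t \<le> h" for t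
        unfolding \<phi>_def
        using that h
        by (intro DERIV_diff grad_line2 fd inN) auto
      from MVT2[OF h this] obtain z where z: "0 < z" "z < h"
        "\<phi> h - \<phi> 0 = (h - 0) * (snd (B (p + (h,z))) - snd (B (p + (0,z))))" by blast
      have "\<Delta> = \<phi> h - \<phi> 0" unfolding \<Delta>_def \<phi>_def by simp
      have dd: "snd (B (p + (h,z))) - snd (B (p + (0,z))) - h * b
          = (snd (B (p + (h,z))) - snd (B p) - snd (L (h,z))) - (snd (B (p + (0,z))) - snd (B p) - snd (L (0,z)))"
        using Lsplit[of h z] Ls2[of h] by (simp add: b_def)
      have "\<bar>snd (B (p + (h,z))) - snd (B (p + (0,z))) - h * b\<bar> \<le> 4 * e * h"
        unfolding dd using est2[of h z] est2[of 0 z] z h by auto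
      then have "\<bar>h * (snd (B (p + (h,z))) - snd (B (p + (0,z))) - h * b)\<bar> \<le> h * (4 * e * h)"
        using h by (simp add: abs_mult mult_left_mono)
      moreover have "\<Delta> - h * h * b = h * (snd (B (p + (h,z))) - snd (B (p + (0,z))) - h * b)"
        using \<open>\<Delta> = \<phi> h - \<phi> 0\<close> z(3) by (simp add: algebra_simps)
      ultimately show ?thesis by (simp add: algebra_simps)
    qed
    have "\<bar>h * h * (a - b)\<bar> \<le> 8 * e * h * h" using A1 A2 by (simp add: algebra_simps abs_le_iff)
    moreover have hh: "h * h > 0" using h by simp
    moreover have "\<bar>h * h * (a - b)\<bar> = (h * h) * \<bar>a - b\<bar>" using hh by (simp add: abs_mult)
    ultimately have "(h * h) * \<bar>a - b\<bar> \<le> (h * h) * (8 * e)" by (simp add: mult_ac)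
    then show ?thesis using mult_le_cancel_left_pos[OF hh] by blast
  qed
  show ?thesis
  proof (rule ccontr)
    assume "fst (L (0,1)) \<noteq> snd (L (1,0))"
    then have "\<bar>a - b\<bar> > 0" by (simp add: a_def b_def)
    from key[of "\<bar>a - b\<bar> / 16"] this show False by simp
  qed
qed


lemma alg1:
  fixes c s E w1 w2 g1 g2 :: real
  assumes "c^2 + s^2 = 1"
  shows "(E*((1-c)*w1 - s *w2))*((1+c)*g2 - s *g1) - (E*((1-c)*w2 + s *w1))*((1+c)*g1 + s *g2)
     = -2* s *E*(w1*g1+w2*g2)"
proof -
  show ?thesis using assms by algebra
qed

theorem mainTheorem7:
  fixes rho0 z0 :: "real \<Rightarrow> real" and muS muN y :: real
    and U0 U0' Om0' Z Zp S2 :: "real \<times> real \<Rightarrow> real"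
  defines "Sigma0 \<equiv> rev_surface rho0 z0 muS muN"
  defines "D0 \<equiv> outside Sigma0"
  defines "KE \<equiv> proj_K D0"
  defines "KEo \<equiv> {p \<in> KE. fst p > 0}"
  assumes "muS < muN"
    and "C1_interval rho0 {muS..muN}" and "C1_interval z0 {muS..muN}"
    and "rho0 muS = 0" and "rho0 muN = 0"
    and "\<forall>mu \<in> {muS<..<muN}. rho0 mu > 0"
    and "z0 muS < z0 muN"
    and "C1_sphere_surface Sigma0"
    and "regular D0 Sigma0 (lift U0)" and "\<forall>x\<in>D0. lap3 (lift U0) x = 0"
    and "regular D0 Sigma0 (lift U0')" and "\<forall>x\<in>D0. lap3 (lift U0') x = 0"
    and "regular D0 Sigma0 (lift Om0')"
    and "\<forall>x\<in>D0. lap3 (lift Om0') x - 4 * (grad3 (lift Om0') x \<bullet> grad3 (lift U0) x) = 0"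
    and "z0 muS < y" and "y < z0 muN"
    and "has_diff_on Z (\<lambda>p. cosU y p *\<^sub>R d0 U0 p + sinU y p *\<^sub>R hodge (d0 U0 p)) KEo"
    and "vanishes_at_infinity Z KEo"
    and "has_diff_on S2 (\<lambda>p. exp (- 2 * U0 p - 2 * Z p) *\<^sub>R
            ((1 - cosU y p) *\<^sub>R d0 Om0' p - sinU y p *\<^sub>R hodge (d0 Om0' p))) KEo"
    and "vanishes_at_infinity S2 KEo"
    and "has_diff_on Zp (\<lambda>p. cosU y p *\<^sub>R d0 U0' p + sinU y p *\<^sub>R hodge (d0 U0' p)) KEo"
    and "vanishes_at_infinity Zp KEo"
  shows "\<forall>p\<in>KEo.
     (let T2 = (\<lambda>q. (- 4 / fst q * S2 q) *\<^sub>R hodge (d0 (\<lambda>r. Zp r + U0' r) q)) in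
        d1 (\<lambda>q. fst q *\<^sub>R hodge (T2 q)) p
          = 8 * sinU y p * exp (- 2 * U0 p - 2 * Z p) * wedge (d0 Om0' p) (hodge (d0 U0' p))
      \<and> cyl_div T2 p
          = 8 / sqrt ((fst p)\<^sup>2 + (snd p - y)\<^sup>2) * exp (- 2 * U0 p - 2 * Z p)
              * (d0 Om0' p \<bullet> d0 U0' p))"
proof -
  note D0_def = assms(2) and Sig_def = assms(1) and KE_def = assms(3) and KEo_def = assms(4)
  have Sc: "closed Sigma0"
  proof -
    obtain h :: "real^3 \<Rightarrow> real^3" and V D where hV: "sphere 0 1 \<subseteq> V"
      "\<forall>x\<in>V. (h has_derivative D x) (at x)" "h ` sphere 0 1 = Sigma0"
      using assms(12) unfolding C1_sphere_surface_def by blast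
    have "continuous_on (sphere 0 1) h"
      using hV(1,2) by (intro continuous_at_imp_continuous_on) (auto dest: has_derivative_continuous)
    then have "compact (h ` sphere 0 1)" by (intro compact_continuous_image) auto
    then show ?thesis using hV(3) compact_imp_closed by auto
  qed
  have oD: "open D0" unfolding D0_def using open_outside[OF Sc] .
  define emb :: "real \<times> real \<Rightarrow> real^3" where "emb q = fst q *\<^sub>R axis 1 1 + snd q *\<^sub>R axis 3 1" for q
  have emb_nth: "emb q $ 1 = fst q" "emb q $ 2 = 0" "emb q $ 3 = snd q" for q
    by (simp_all add: emb_def axis_def)
  have cyl_emb: "cyl_pt a b 0 = emb (a, b)" for a b
    unfolding vec_eq_iff forall_3 by (simp add: cyl_pt_def emb_nth)
  have lift_emb: "lift U (emb q) = U q" if "fst q > 0" for U q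
    using that by (simp add: lift_def emb_nth)
  have emb_der: "(emb has_derivative emb) (at q)" for q
  proof -
    have "((\<lambda>q. fst q *\<^sub>R (axis 1 1 :: real^3) + snd q *\<^sub>R axis 3 1) has_derivative
         (\<lambda>q. fst q *\<^sub>R (axis 1 1 :: real^3) + snd q *\<^sub>R axis 3 1)) (at q)"
      by (auto intro!: derivative_eq_intros)
    then show ?thesis unfolding emb_def[abs_def] .
  qed
  have KEo_eq: "KEo = {q. 0 < fst q} \<inter> emb -` D0"
    unfolding KEo_def KE_def proj_K_def using cyl_emb by auto
  have oK: "open KEo"
  proof -
    have "open {q::real\<times>real. 0 < fst q}"
    proof -
      have "{q::real\<times>real. 0 < fst q} = fst -` {0<..}" by auto
      then show ?thesis using open_vimage_fst[OF open_greaterThan[of "0::real"]] by simp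
    qed
    moreover have "open (emb -` D0)"
      using oD by (rule continuous_open_vimage) (auto intro: has_derivative_continuous emb_der)
    ultimately show ?thesis unfolding KEo_eq by auto
  qed
  obtain g where gd: "\<forall>x\<in>D0. (lift U0' has_derivative (\<lambda>h. g x \<bullet> h)) (at x)"
    and gC: "\<forall>i\<in>Basis. C1_on D0 (\<lambda>x. g x \<bullet> i)"
    using assms(15) unfolding regular_def C2_on_def by blast
  have gk: "\<exists>gk. \<forall>x\<in>D0. ((\<lambda>x. g x $ k) has_derivative (\<lambda>h. gk x \<bullet> h)) (at x)" for k
  proof -
    have "axis k (1::real) \<in> Basis" by (simp add: axis_in_Basis_iff)
    with gC have "C1_on D0 (\<lambda>x. g x \<bullet> axis k 1)" by blast
    then show ?thesis unfolding C1_on_def by (auto simp: inner_axis)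
  qed
  obtain g1 where g1: "\<forall>x\<in>D0. ((\<lambda>x. g x $ 1) has_derivative (\<lambda>h. g1 x \<bullet> h)) (at x)"
    using gk by blast
  obtain g3 where g3: "\<forall>x\<in>D0. ((\<lambda>x. g x $ 3) has_derivative (\<lambda>h. g3 x \<bullet> h)) (at x)"
    using gk by blast
  define G where "G q = (g (emb q) $ 1, g (emb q) $ 3)" for q
  have UG: "(U0' has_derivative (\<lambda>k. fst (G q) * fst k + snd (G q) * snd k)) (at q)"
    if q: "q \<in> KEo" for q
  proof -
    have eD: "emb q \<in> D0" using q KEo_eq by auto
    have "((\<lambda>q. lift U0' (emb q)) has_derivative (\<lambda>k. g (emb q) \<bullet> emb k)) (at q)"
      using has_derivative_compose[OF emb_der gd[rule_format, OF eD]] .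
    moreover have "(\<lambda>k. g (emb q) \<bullet> emb k) = (\<lambda>k. fst (G q) * fst k + snd (G q) * snd k)"
      by (auto simp: G_def emb_def inner_add_right inner_axis)
    ultimately have "((\<lambda>q. lift U0' (emb q)) has_derivative (\<lambda>k. fst (G q) * fst k + snd (G q) * snd k)) (at q)"
      by simp
    then show ?thesis
      by (rule has_derivative_transform_within_open[OF _ oK q]) (auto simp: KEo_eq lift_emb)
  qed
  have Gd: "\<exists>L. (G has_derivative L) (at q)" if q: "q \<in> KEo" for q
  proof -
    have eD: "emb q \<in> D0" using q KEo_eq by auto
    have "((\<lambda>q. (g (emb q) $ 1, g (emb q) $ 3)) has_derivative
      (\<lambda>k. (g1 (emb q) \<bullet> emb k, g3 (emb q) \<bullet> emb k))) (at q)"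
      by (intro has_derivative_Pair has_derivative_compose[OF emb_der, where g="\<lambda>x. g x $ _", OF g1[rule_format, OF eD]]
          has_derivative_compose[OF emb_der, where g="\<lambda>x. g x $ _", OF g3[rule_format, OF eD]])
    then show ?thesis unfolding G_def[abs_def] by blast
  qed
  have dU: "d0 U0' q = G q" if q: "q \<in> KEo" for q
    using pd_from_der[OF UG[OF q]] by (simp add: d0_def)
  define F where "F q = cosU y q *\<^sub>R G q + sinU y q *\<^sub>R hodge (G q)" for q
  define B where "B q = F q + G q" for q
  have ZpF: "(Zp has_derivative (\<lambda>k. fst (F q) * fst k + snd (F q) * snd k)) (at q)"
    if q: "q \<in> KEo" for q
    using assms(25) q dU[OF q] unfolding has_diff_on_def F_def by auto
  have WB: "((\<lambda>r. Zp r + U0' r) has_derivative (\<lambda>k. fst (B q) * fst k + snd (B q) * snd k)) (at q)"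
    if q: "q \<in> KEo" for q
  proof -
    have "((\<lambda>r. Zp r + U0' r) has_derivative (\<lambda>k. (fst (F q) * fst k + snd (F q) * snd k) +
       (fst (G q) * fst k + snd (G q) * snd k))) (at q)"
      by (rule has_derivative_add[OF ZpF[OF q] UG[OF q]])
    moreover have "(\<lambda>k. (fst (F q) * fst k + snd (F q) * snd k) + (fst (G q) * fst k + snd (G q) * snd k))
      = (\<lambda>k. fst (B q) * fst k + snd (B q) * snd k)"
      by (auto simp: B_def algebra_simps)
    ultimately show ?thesis by simp
  qed
  have dW: "d0 (\<lambda>r. Zp r + U0' r) q = B q" if q: "q \<in> KEo" for q
    using pd_from_der[OF WB[OF q]] by (simp add: d0_def)
  show ?thesis
  proof (intro ballI)
    fix p assume p: "p \<in> KEo"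
    have p0: "fst p > 0" using p KEo_eq by auto
    have sq0: "(fst p)\<^sup>2 + (snd p - y)\<^sup>2 > 0" using p0 by (simp add: add_pos_nonneg)
    have nd: "((\<lambda>q::real\<times>real. (fst q)\<^sup>2 + (snd q - y)\<^sup>2) has_derivative
        (\<lambda>k. 2 * fst p * fst k + 2 * (snd p - y) * snd k)) (at p)"
      by (auto intro!: derivative_eq_intros simp: algebra_simps)
    obtain Lq where Lq: "((\<lambda>q::real\<times>real. sqrt ((fst q)\<^sup>2 + (snd q - y)\<^sup>2)) has_derivative Lq) (at p)"
      using has_derivative_real_sqrt[OF sq0 nd] by blast
    have sqne: "sqrt ((fst p)\<^sup>2 + (snd p - y)\<^sup>2) \<noteq> 0" using sq0 p0 by simp
    have n1: "((\<lambda>q::real\<times>real. snd q - y) has_derivative (\<lambda>k. snd k)) (at p)"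
      by (auto intro!: derivative_eq_intros)
    have n2: "((\<lambda>q::real\<times>real. fst q) has_derivative (\<lambda>k. fst k)) (at p)"
      by (auto intro!: derivative_eq_intros)
    have cd: "\<exists>L. (cosU y has_derivative L) (at p)"
      unfolding cosU_def[abs_def] using has_derivative_divide[OF n1 Lq sqne] by blast
    have sd: "\<exists>L. (sinU y has_derivative L) (at p)"
      unfolding sinU_def[abs_def] using has_derivative_divide[OF n2 Lq sqne] by blast
    obtain LG where LG: "(G has_derivative LG) (at p)" using Gd[OF p] by blast
    obtain Lc where Lc: "(cosU y has_derivative Lc) (at p)" using cd by blast
    obtain Ls where Ls: "(sinU y has_derivative Ls) (at p)" using sd by blast
    have "\<exists>L. (B has_derivative L) (at p)"
    proof -
      have h1: "((\<lambda>q. (snd (G q), - fst (G q))) has_derivative (\<lambda>k. (snd (LG k), - fst (LG k)))) (at p)"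
        by (intro has_derivative_Pair has_derivative_snd has_derivative_fst has_derivative_minus LG)
      show ?thesis
        using has_derivative_add[OF has_derivative_add[OF has_derivative_scaleR[OF Lc LG] has_derivative_scaleR[OF Ls h1]] LG]
        unfolding B_def[abs_def] F_def hodge_def by blast
    qed
    then obtain L where L: "(B has_derivative L) (at p)" by blast
    have sym: "fst (L (0,1)) = snd (L (1,0))"
      by (rule clairaut[OF oK p WB L])
    define A where "A q = exp (- 2 * U0 q - 2 * Z q) *\<^sub>R
            ((1 - cosU y q) *\<^sub>R d0 Om0' q - sinU y q *\<^sub>R hodge (d0 Om0' q))" for q
    have SA: "(S2 has_derivative (\<lambda>k. fst (A p) * fst k + snd (A p) * snd k)) (at p)"
      using assms(23) p unfolding has_diff_on_def A_def by auto
    let ?W = "\<lambda>r. Zp r + U0' r"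
    let ?T2 = "\<lambda>q. (- 4 / fst q * S2 q) *\<^sub>R hodge (d0 ?W q)"
    have e1: "fst q *\<^sub>R hodge (?T2 q) = (4 * S2 q * fst (B q), 4 * S2 q * snd (B q))"
      if q: "q \<in> KEo" for q
    proof -
      have "fst q > 0" using q KEo_eq by auto
      then show ?thesis using dW[OF q] by (simp add: hodge_def field_simps)
    qed
    have e2: "fst q * fst (?T2 q) = - 4 * S2 q * snd (B q)" if q: "q \<in> KEo" for q
    proof -
      have "fst q > 0" using q KEo_eq by auto
      then show ?thesis using dW[OF q] by (simp add: hodge_def field_simps)
    qed
    have e3: "snd (?T2 q) = 4 * inverse (fst q) * S2 q * fst (B q)" if q: "q \<in> KEo" for q
      using dW[OF q] by (simp add: hodge_def field_simps)
    have D1: "((\<lambda>q. 4 * S2 q * fst (B q)) has_derivative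
        (\<lambda>k. 4 * (S2 p * fst (L k) + (fst (A p) * fst k + snd (A p) * snd k) * fst (B p)))) (at p)"
      by (auto intro!: derivative_eq_intros SA L simp: algebra_simps)
    have D2: "((\<lambda>q. 4 * S2 q * snd (B q)) has_derivative
        (\<lambda>k. 4 * (S2 p * snd (L k) + (fst (A p) * fst k + snd (A p) * snd k) * snd (B p)))) (at p)"
      by (auto intro!: derivative_eq_intros SA L simp: algebra_simps)
    have D3: "((\<lambda>q. - 4 * S2 q * snd (B q)) has_derivative
        (\<lambda>k. - 4 * (S2 p * snd (L k) + (fst (A p) * fst k + snd (A p) * snd k) * snd (B p)))) (at p)"
      by (auto intro!: derivative_eq_intros SA L simp: algebra_simps)
    have D4: "((\<lambda>q. 4 * inverse (fst q) * S2 q * fst (B q)) has_derivative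
        (\<lambda>k. 4 * (- (inverse (fst p) * fst k * inverse (fst p))) * S2 p * fst (B p)
           + 4 * inverse (fst p) * (S2 p * fst (L k) + (fst (A p) * fst k + snd (A p) * snd k) * fst (B p)))) (at p)"
      using p0 by (auto intro!: derivative_eq_intros SA L simp: algebra_simps)
    have P1: "pd_z (\<lambda>q. fst (fst q *\<^sub>R hodge (?T2 q))) p = 4 * (S2 p * fst (L (0,1)) + snd (A p) * fst (B p))"
    proof -
      have "((\<lambda>q. fst (fst q *\<^sub>R hodge (?T2 q))) has_derivative
        (\<lambda>k. 4 * (S2 p * fst (L k) + (fst (A p) * fst k + snd (A p) * snd k) * fst (B p)))) (at p)"
        by (rule has_derivative_transform_within_open[OF D1 oK p]) (metis e1 fst_conv snd_conv)
      from pd_from_der(2)[OF this] show ?thesis by simp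
    qed
    have P2: "pd_rho (\<lambda>q. snd (fst q *\<^sub>R hodge (?T2 q))) p = 4 * (S2 p * snd (L (1,0)) + fst (A p) * snd (B p))"
    proof -
      have "((\<lambda>q. snd (fst q *\<^sub>R hodge (?T2 q))) has_derivative
        (\<lambda>k. 4 * (S2 p * snd (L k) + (fst (A p) * fst k + snd (A p) * snd k) * snd (B p)))) (at p)"
        by (rule has_derivative_transform_within_open[OF D2 oK p]) (metis e1 fst_conv snd_conv)
      from pd_from_der(1)[OF this] show ?thesis by simp
    qed
    have P3: "pd_rho (\<lambda>q. fst q * fst (?T2 q)) p = - 4 * (S2 p * snd (L (1,0)) + fst (A p) * snd (B p))"
    proof -
      have "((\<lambda>q. fst q * fst (?T2 q)) has_derivative
        (\<lambda>k. - 4 * (S2 p * snd (L k) + (fst (A p) * fst k + snd (A p) * snd k) * snd (B p)))) (at p)"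
        by (rule has_derivative_transform_within_open[OF D3 oK p]) (metis e2)
      from pd_from_der(1)[OF this] show ?thesis by simp
    qed
    have P4: "pd_z (\<lambda>q. snd (?T2 q)) p = 4 * inverse (fst p) * (S2 p * fst (L (0,1)) + snd (A p) * fst (B p))"
    proof -
      have "((\<lambda>q. snd (?T2 q)) has_derivative
        (\<lambda>k. 4 * (- (inverse (fst p) * fst k * inverse (fst p))) * S2 p * fst (B p)
           + 4 * inverse (fst p) * (S2 p * fst (L k) + (fst (A p) * fst k + snd (A p) * snd k) * fst (B p)))) (at p)"
        by (rule has_derivative_transform_within_open[OF D4 oK p]) (metis e3)
      from pd_from_der(2)[OF this] show ?thesis by simp
    qed
    obtain w1 w2 where om: "d0 Om0' p = (w1, w2)" by (cases "d0 Om0' p")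
    obtain h1 h2 where gg: "G p = (h1, h2)" by (cases "G p")
    define c where "c = cosU y p"
    define s where "s = sinU y p"
    define E where "E = exp (- 2 * U0 p - 2 * Z p)"
    have cs: "c^2 + s^2 = 1"
    proof -
      have "c^2 + s^2 = ((snd p - y)^2 + (fst p)^2) / (sqrt ((fst p)\<^sup>2 + (snd p - y)\<^sup>2))^2"
        unfolding c_def s_def cosU_def sinU_def by (simp add: power_divide add_divide_distrib)
      also have "\<dots> = 1" using sq0 p0 by simp
      finally show ?thesis .
    qed
    have Ap: "fst (A p) = E*((1-c)*w1 - s *w2)" "snd (A p) = E*((1-c)*w2 + s *w1)"
      by (simp_all add: A_def om hodge_def E_def c_def s_def algebra_simps)
    have Bp: "fst (B p) = (1+c)*h1 + s *h2" "snd (B p) = (1+c)*h2 - s *h1"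
      by (simp_all add: B_def F_def gg hodge_def c_def s_def algebra_simps)
    have key: "fst (A p) * snd (B p) - snd (A p) * fst (B p) = -2* s *E*(w1*h1+w2*h2)"
      unfolding Ap Bp by (rule alg1[OF cs])
    have dUp: "d0 U0' p = (h1, h2)" using dU[OF p] gg by simp
    have c1: "d1 (\<lambda>q. fst q *\<^sub>R hodge (?T2 q)) p
          = 8 * sinU y p * exp (- 2 * U0 p - 2 * Z p) * wedge (d0 Om0' p) (hodge (d0 U0' p))"
    proof -
      have "d1 (\<lambda>q. fst q *\<^sub>R hodge (?T2 q)) p = 4 * (fst (A p) * snd (B p) - snd (A p) * fst (B p))"
        unfolding d1_def P1 P2 sym by (simp add: algebra_simps)
      also have "\<dots> = 8 * s * E * wedge (d0 Om0' p) (hodge (d0 U0' p))"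
        unfolding key om dUp by (simp add: wedge_def hodge_def algebra_simps)
      finally show ?thesis by (simp add: s_def E_def)
    qed
    have c2: "cyl_div ?T2 p
          = 8 / sqrt ((fst p)\<^sup>2 + (snd p - y)\<^sup>2) * exp (- 2 * U0 p - 2 * Z p)
              * (d0 Om0' p \<bullet> d0 U0' p)"
    proof -
      have "cyl_div ?T2 p = - 4 * (fst (A p) * snd (B p) - snd (A p) * fst (B p)) / fst p"
        unfolding cyl_div_def P3 P4 sym using p0 by (simp add: field_simps)
      also have "\<dots> = 8 * (s / fst p) * E * (w1*h1+w2*h2)"
        unfolding key by (simp add: algebra_simps)
      also have "s / fst p = 1 / sqrt ((fst p)\<^sup>2 + (snd p - y)\<^sup>2)"
        unfolding s_def sinU_def using p0 by simp
      finally show ?thesis by (simp add: E_def om dUp)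
    qed
    show "let T2 = ?T2 in d1 (\<lambda>q. fst q *\<^sub>R hodge (T2 q)) p
          = 8 * sinU y p * exp (- 2 * U0 p - 2 * Z p) * wedge (d0 Om0' p) (hodge (d0 U0' p))
      \<and> cyl_div T2 p
          = 8 / sqrt ((fst p)\<^sup>2 + (snd p - y)\<^sup>2) * exp (- 2 * U0 p - 2 * Z p)
              * (d0 Om0' p \<bullet> d0 U0' p)"
      using c1 c2 by (simp only: Let_def)
  qed
qed

end
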